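(* Let $i\in\{1,2\}$, let $T\ge 1$, $\mathbb{T}=\{0,1,\dots,T-1\}$, and consider the linear time-varying system $\Sigma_{i,\mathbb{T}}$: $x_i(t+1)=A_i(t)x_i(t)+B_i(t)u_i(t)$, $y_i(t)=C_i(t)x_i(t)+D_i(t)u_i(t)$, $t\in\mathbb{T}$, with $u_i(t)\in\mathbb{R}^{n_u}$, $y_i(t)\in\mathbb{R}^{n_y}$, and fixed initial state $x_i(0)=x_{i0}$. Let $\mathcal{B}_{i,x_{i0}}\subseteq\mathbb{R}^{n_wT}$ ($n_w=n_u+n_y$) be its admissible behavior (defined in the context). Then $\mathcal{B}_{i,x_{i0}}$ is an affine set. Moreover, suppose $n_uT+1$ test inputs $\mathbf{u}_i^0,\mathbf{u}_i^1,\dots,\mathbf{u}_i^{n_uT}\in\mathbb{R}^{n_uT}$ are applied, each from the initial state $x_{i0}$, producing outputs $\mathbf{y}_i^k$, and that (1) $\mathbf{u}_i^0=0\in\mathbb{R}^{n_uT}$ and (2) $\operatorname{rank}[\mathbf{u}_i^1,\dots,\mathbf{u}_i^{n_uT}]=n_uT$. Set $w_i^k=\operatorname{col}(\mathbf{u}_i^k,\mathbf{y}_i^k)$ and $W_i=[w_i^1-w_i^0,\,w_i^2-w_i^0,\dots,w_i^{n_uT}-w_i^0]$. Then a vector $\overline{w}=\operatorname{col}(\overline{\mathbf{u}}_i,\overline{\mathbf{y}}_i)\in\mathbb{R}^{n_wT}$ belongs to $\mathcal{B}_{i,x_{i0}}$ if and only if there exists $g_i\in\mathbb{R}^{n_uT}$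 with $\overline{w}=W_ig_i+w_i^0$.
   Context: The state $x_i(t)$ has some finite (unknown) dimension and $A_i(t),B_i(t),C_i(t),D_i(t)$ are real matrices of compatible sizes. For a sequence over $\mathbb{T}$, supervectors are $\mathbf{u}_i=[u_i(0)^{\rm T},\dots,u_i(T-1)^{\rm T}]^{\rm T}\in\mathbb{R}^{n_uT}$, $\mathbf{y}_i=[y_i(0)^{\rm T},\dots,y_i(T-1)^{\rm T}]^{\rm T}\in\mathbb{R}^{n_yT}$, and similarly $\mathbf{x}_i$. The admissible behavior $\mathcal{B}_{i,x_{i0}}$ is the set of all $\operatorname{col}(\mathbf{u}_i,\mathbf{y}_i)\in\mathbb{R}^{n_wT}$ for which there exists a state supervector $\mathbf{x}_i$ with $x_i(0)=x_{i0}$ such that $(\mathbf{u}_i,\mathbf{y}_i,\mathbf{x}_i)$ satisfies the system equations for all $t\in\mathbb{T}$. The output $\mathbf{y}_i^k$ is the output supervector of the system driven by input $\mathbf{u}_i^k$ from $x_i(0)=x_{i0}$. *)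

theory Defs
  imports "Jordan_Normal_Form.DL_Rank"
begin

text \<open>Supervectors are JNF vectors of dimension m*T; block t (t < T) holds the
  value at time t, i.e. entries t*m .. t*m+m-1.\<close>

definition blk :: "nat \<Rightarrow> real vec \<Rightarrow> nat \<Rightarrow> real vec" where
  "blk m v t = vec m (\<lambda>j. v $ (t * m + j))"

definition supervec :: "nat \<Rightarrow> nat \<Rightarrow> (nat \<Rightarrow> real vec) \<Rightarrow> real vec" where
  "supervec m T f = vec (m * T) (\<lambda>k. f (k div m) $ (k mod m))"

text \<open>col(u,y) is u @v y; the two parts of w in R^{(nu+ny)T}.\<close>
definition u_part :: "nat \<Rightarrow> nat \<Rightarrow> real vec \<Rightarrow> real vec" where
  "u_part nu T w = vec (nu * T) (\<lambda>i. w $ i)"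

definition y_part :: "nat \<Rightarrow> nat \<Rightarrow> nat \<Rightarrow> real vec \<Rightarrow> real vec" where
  "y_part nu ny T w = vec (ny * T) (\<lambda>i. w $ (nu * T + i))"

definition behavior ::
  "(nat \<Rightarrow> real mat) \<Rightarrow> (nat \<Rightarrow> real mat) \<Rightarrow> (nat \<Rightarrow> real mat) \<Rightarrow> (nat \<Rightarrow> real mat)
   \<Rightarrow> nat \<Rightarrow> nat \<Rightarrow> nat \<Rightarrow> real vec \<Rightarrow> real vec set" where
  "behavior A B C D nu ny T x0 =
    {w \<in> carrier_vec ((nu + ny) * T).
      \<exists>x :: nat \<Rightarrow> real vec. x 0 = x0 \<and>
        (\<forall>t < T. x (Suc t) = A t *\<^sub>v x t + B t *\<^sub>v blk nu (u_part nu T w) t \<and>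
                 blk ny (y_part nu ny T w) t = C t *\<^sub>v x t + D t *\<^sub>v blk nu (u_part nu T w) t)}"

primrec state_traj ::
  "(nat \<Rightarrow> real mat) \<Rightarrow> (nat \<Rightarrow> real mat) \<Rightarrow> nat \<Rightarrow> real vec \<Rightarrow> real vec \<Rightarrow> nat \<Rightarrow> real vec" where
  "state_traj A B nu x0 u 0 = x0"
| "state_traj A B nu x0 u (Suc t) =
     A t *\<^sub>v state_traj A B nu x0 u t + B t *\<^sub>v blk nu u t"

definition sys_output ::
  "(nat \<Rightarrow> real mat) \<Rightarrow> (nat \<Rightarrow> real mat) \<Rightarrow> (nat \<Rightarrow> real mat) \<Rightarrow> (nat \<Rightarrow> real mat)
   \<Rightarrow> nat \<Rightarrow> nat \<Rightarrow> nat \<Rightarrow> real vec \<Rightarrow> real vec \<Rightarrow> real vec" where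
  "sys_output A B C D nu ny T x0 u =
     supervec ny T (\<lambda>t. C t *\<^sub>v state_traj A B nu x0 u t + D t *\<^sub>v blk nu u t)"

definition affine_vec :: "real vec set \<Rightarrow> bool" where
  "affine_vec S \<longleftrightarrow> (\<forall>x\<in>S. \<forall>y\<in>S. \<forall>c::real. c \<cdot>\<^sub>v x + (1 - c) \<cdot>\<^sub>v y \<in> S)"

end

theory Submission imports Defs begin
definition selP :: "nat \<Rightarrow> nat \<Rightarrow> nat \<Rightarrow> real mat" where
  "selP nu T t = mat nu (nu * T) (\<lambda>(i,j). if j = t * nu + i then 1 else 0)"

lemma blk_selP:
  assumes "t < T" "u \<in> carrier_vec (nu * T)"
  shows "blk nu u t = selP nu T t *\<^sub>v u"
proof (rule eq_vecI)
  fix i assume i: "i < dim_vec (selP nu T t *\<^sub>v u)"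
  hence i': "i < nu" by (simp add: selP_def)
  have lt: "t * nu + i < nu * T"
  proof -
    have "t * nu + i < t * nu + nu" using i' by simp
    also have "\<dots> = Suc t * nu" by simp
    also have "\<dots> \<le> T * nu" using assms(1) by (intro mult_right_mono) auto
    finally show ?thesis by (simp add: mult.commute)
  qed
  have "(selP nu T t *\<^sub>v u) $ i = (\<Sum>j\<in>{0..<nu*T}. (if j = t * nu + i then 1 else 0) * u $ j)"
    using i' assms(2) by (simp add: selP_def mult_mat_vec_def scalar_prod_def)
  also have "\<dots> = (\<Sum>j\<in>{0..<nu*T}. if j = t * nu + i then u $ j else 0)"
    by (rule sum.cong) auto
  also have "\<dots> = u $ (t * nu + i)" using lt by (simp add: sum.delta')
  finally show "blk nu u t $ i = (selP nu T t *\<^sub>v u) $ i" using i' by (simp add: blk_def)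
qed (simp add: blk_def selP_def)

lemma vec_swap3: "a \<in> carrier_vec n \<Longrightarrow> b \<in> carrier_vec n \<Longrightarrow> c \<in> carrier_vec n \<Longrightarrow>
  (a + b) + (c::real vec) = (a + c) + b"
  by (rule eq_vecI) auto

primrec Smat :: "(nat \<Rightarrow> real mat) \<Rightarrow> (nat \<Rightarrow> real mat) \<Rightarrow> nat \<Rightarrow> nat \<Rightarrow> nat \<Rightarrow> nat \<Rightarrow> real mat" where
  "Smat A B nx nu T 0 = 0\<^sub>m nx (nu * T)"
| "Smat A B nx nu T (Suc t) = A t * Smat A B nx nu T t + B t * selP nu T t"

primrec ztraj :: "(nat \<Rightarrow> real mat) \<Rightarrow> real vec \<Rightarrow> nat \<Rightarrow> real vec" where
  "ztraj A x0 0 = x0"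
| "ztraj A x0 (Suc t) = A t *\<^sub>v ztraj A x0 t"

lemma traj_affine:
  assumes dimA: "\<forall>t<T. A t \<in> carrier_mat nx nx"
    and dimB: "\<forall>t<T. B t \<in> carrier_mat nx nu"
    and x0: "x0 \<in> carrier_vec nx"
    and u: "u \<in> carrier_vec (nu * T)"
  shows "t \<le> T \<Longrightarrow> Smat A B nx nu T t \<in> carrier_mat nx (nu * T) \<and> ztraj A x0 t \<in> carrier_vec nx
     \<and> state_traj A B nu x0 u t = Smat A B nx nu T t *\<^sub>v u + ztraj A x0 t"
proof (induction t)
  case 0
  then show ?case using x0 u by auto
next
  case (Suc t)
  hence t: "t < T" by simp
  have At: "A t \<in> carrier_mat nx nx" and Bt: "B t \<in> carrier_mat nx nu" using dimA dimB t by auto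
  have P: "selP nu T t \<in> carrier_mat nu (nu * T)" by (simp add: selP_def)
  from Suc t have S: "Smat A B nx nu T t \<in> carrier_mat nx (nu * T)" and z: "ztraj A x0 t \<in> carrier_vec nx"
    and st: "state_traj A B nu x0 u t = Smat A B nx nu T t *\<^sub>v u + ztraj A x0 t" by auto
  have "state_traj A B nu x0 u (Suc t) = A t *\<^sub>v (Smat A B nx nu T t *\<^sub>v u + ztraj A x0 t) + B t *\<^sub>v (selP nu T t *\<^sub>v u)"
    using st blk_selP[OF t u] by simp
  also have "\<dots> = ((A t * Smat A B nx nu T t) *\<^sub>v u + A t *\<^sub>v ztraj A x0 t) + (B t * selP nu T t) *\<^sub>v u"
    using At Bt S z P u by (simp add: mult_add_distrib_mat_vec assoc_mult_mat_vec)
  also have "\<dots> = ((A t * Smat A B nx nu T t) *\<^sub>v u + (B t * selP nu T t) *\<^sub>v u) + A t *\<^sub>v ztraj A x0 t"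
    using At Bt S z P u by (intro vec_swap3[where n=nx]) auto
  also have "\<dots> = Smat A B nx nu T (Suc t) *\<^sub>v u + ztraj A x0 (Suc t)"
    using At Bt S z P u by (simp only: Smat.simps ztraj.simps add_mult_distrib_mat_vec[of "A t * Smat A B nx nu T t" nx "nu * T" "B t * selP nu T t" u, OF mult_carrier_mat mult_carrier_mat])
  finally show ?case using At Bt S z P by auto
qed

lemma blk_supervec:
  assumes "t < T" "f t \<in> carrier_vec m"
  shows "blk m (supervec m T f) t = f t"
proof (rule eq_vecI)
  fix j assume "j < dim_vec (f t)"
  hence j: "j < m" using assms by simp
  have lt: "t * m + j < m * T"
  proof -
    have "t * m + j < Suc t * m" using j by simp
    also have "\<dots> \<le> T * m" using assms(1) by (intro mult_right_mono) auto
    finally show ?thesis by (simp add: mult.commute)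
  qed
  have "(t * m + j) div m = t" "(t * m + j) mod m = j" using j by auto
  then show "blk m (supervec m T f) t $ j = f t $ j"
    using j lt by (simp add: blk_def supervec_def)
qed (use assms in \<open>simp add: blk_def\<close>)

lemma supervec_blk:
  assumes "v \<in> carrier_vec (m * T)"
  shows "supervec m T (blk m v) = v"
proof (rule eq_vecI)
  fix k assume "k < dim_vec v"
  hence k: "k < m * T" using assms by simp
  hence m: "m > 0" by (cases m) auto
  have "k div m < T" using k by (simp add: less_mult_imp_div_less mult.commute)
  moreover have "k div m * m + k mod m = k" by simp
  ultimately show "supervec m T (blk m v) $ k = v $ k"
    using k m by (simp add: supervec_def blk_def)
qed (use assms in \<open>simp add: supervec_def\<close>)

lemma supervec_cong:
  assumes "\<And>t. t < T \<Longrightarrow> f t = g t"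
  shows "supervec m T f = supervec m T g"
proof -
  have "\<And>k. k < m * T \<Longrightarrow> k div m < T"
    by (simp add: less_mult_imp_div_less mult.commute)
  then show ?thesis using assms unfolding supervec_def by (intro eq_vecI) auto
qed

definition Qmat where
  "Qmat A B C D nx nu T t = C t * Smat A B nx nu T t + D t * selP nu T t"

definition Mbig where
  "Mbig A B C D nx nu ny T = mat (ny * T) (nu * T) (\<lambda>(i,j). Qmat A B C D nx nu T (i div ny) $$ (i mod ny, j))"

definition F0 where
  "F0 A C x0 ny T = supervec ny T (\<lambda>t. C t *\<^sub>v ztraj A x0 t)"

lemma out_affine:
  assumes dimA: "\<forall>t<T. A t \<in> carrier_mat nx nx"
    and dimB: "\<forall>t<T. B t \<in> carrier_mat nx nu"
    and dimC: "\<forall>t<T. C t \<in> carrier_mat ny nx"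
    and dimD: "\<forall>t<T. D t \<in> carrier_mat ny nu"
    and x0: "x0 \<in> carrier_vec nx"
    and u: "u \<in> carrier_vec (nu * T)"
  shows "sys_output A B C D nu ny T x0 u = Mbig A B C D nx nu ny T *\<^sub>v u + F0 A C x0 ny T"
proof (rule eq_vecI)
  fix k assume "k < dim_vec (Mbig A B C D nx nu ny T *\<^sub>v u + F0 A C x0 ny T)"
  hence k: "k < ny * T" by (simp add: Mbig_def F0_def supervec_def)
  hence m: "ny > 0" by (cases ny) auto
  define t where "t = k div ny"
  define r where "r = k mod ny"
  have t: "t < T" using k by (simp add: t_def less_mult_imp_div_less mult.commute)
  have r: "r < ny" using m by (simp add: r_def)
  have At: "A t \<in> carrier_mat nx nx" and Bt: "B t \<in> carrier_mat nx nu"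
    and Ct: "C t \<in> carrier_mat ny nx" and Dt: "D t \<in> carrier_mat ny nu" using assms t by auto
  have P: "selP nu T t \<in> carrier_mat nu (nu * T)" by (simp add: selP_def)
  from traj_affine[OF dimA dimB x0 u, of t] t
  have S: "Smat A B nx nu T t \<in> carrier_mat nx (nu * T)" and z: "ztraj A x0 t \<in> carrier_vec nx"
    and st: "state_traj A B nu x0 u t = Smat A B nx nu T t *\<^sub>v u + ztraj A x0 t" by auto
  have Q: "Qmat A B C D nx nu T t \<in> carrier_mat ny (nu * T)"
    using Ct Dt S P by (simp add: Qmat_def)
  have eq: "C t *\<^sub>v state_traj A B nu x0 u t + D t *\<^sub>v blk nu u t
      = Qmat A B C D nx nu T t *\<^sub>v u + C t *\<^sub>v ztraj A x0 t"
  proof -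
    have "C t *\<^sub>v state_traj A B nu x0 u t + D t *\<^sub>v blk nu u t
      = ((C t * Smat A B nx nu T t) *\<^sub>v u + C t *\<^sub>v ztraj A x0 t) + (D t * selP nu T t) *\<^sub>v u"
      using st blk_selP[OF t u] Ct Dt S z P u
      by (simp add: mult_add_distrib_mat_vec assoc_mult_mat_vec)
    also have "\<dots> = ((C t * Smat A B nx nu T t) *\<^sub>v u + (D t * selP nu T t) *\<^sub>v u) + C t *\<^sub>v ztraj A x0 t"
      using Ct Dt S z P u by (intro vec_swap3[where n=ny]) auto
    also have "\<dots> = Qmat A B C D nx nu T t *\<^sub>v u + C t *\<^sub>v ztraj A x0 t"
      unfolding Qmat_def
      by (simp only: add_mult_distrib_mat_vec[of "C t * Smat A B nx nu T t" ny "nu * T" "D t * selP nu T t" u, OF mult_carrier_mat[OF Ct S] mult_carrier_mat[OF Dt P] u])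
    finally show ?thesis .
  qed
  have row: "row (Mbig A B C D nx nu ny T) k = row (Qmat A B C D nx nu T t) r"
    using k Q r by (intro eq_vecI) (auto simp: Mbig_def t_def r_def)
  have "sys_output A B C D nu ny T x0 u $ k = (Qmat A B C D nx nu T t *\<^sub>v u + C t *\<^sub>v ztraj A x0 t) $ r"
    using k eq by (simp add: sys_output_def supervec_def t_def r_def)
  also have "\<dots> = row (Qmat A B C D nx nu T t) r \<bullet> u + (C t *\<^sub>v ztraj A x0 t) $ r"
    using Q Ct r by simp
  also have "\<dots> = (Mbig A B C D nx nu ny T *\<^sub>v u + F0 A C x0 ny T) $ k"
    using k row by (simp add: Mbig_def F0_def supervec_def t_def r_def)
  finally show "sys_output A B C D nu ny T x0 u $ k = (Mbig A B C D nx nu ny T *\<^sub>v u + F0 A C x0 ny T) $ k" .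
qed (simp add: sys_output_def supervec_def Mbig_def F0_def)

lemma behavior_iff:
  assumes dimD: "\<forall>t<T. D t \<in> carrier_mat ny nu"
  shows "wb \<in> behavior A B C D nu ny T x0 \<longleftrightarrow> wb \<in> carrier_vec ((nu + ny) * T) \<and>
     y_part nu ny T wb = sys_output A B C D nu ny T x0 (u_part nu T wb)"
proof
  assume "wb \<in> behavior A B C D nu ny T x0"
  then obtain x where wb: "wb \<in> carrier_vec ((nu + ny) * T)" and x0: "x 0 = x0"
    and rec: "\<forall>t < T. x (Suc t) = A t *\<^sub>v x t + B t *\<^sub>v blk nu (u_part nu T wb) t \<and>
                 blk ny (y_part nu ny T wb) t = C t *\<^sub>v x t + D t *\<^sub>v blk nu (u_part nu T wb) t"
    unfolding behavior_def by blast
  have xt: "t \<le> T \<Longrightarrow> x t = state_traj A B nu x0 (u_part nu T wb) t" for t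
    by (induction t) (use x0 rec in auto)
  have "y_part nu ny T wb = supervec ny T (blk ny (y_part nu ny T wb))"
    by (rule supervec_blk[symmetric]) (simp add: y_part_def)
  also have "\<dots> = sys_output A B C D nu ny T x0 (u_part nu T wb)"
    unfolding sys_output_def by (rule supervec_cong) (use rec xt in auto)
  finally show "wb \<in> carrier_vec ((nu + ny) * T) \<and>
     y_part nu ny T wb = sys_output A B C D nu ny T x0 (u_part nu T wb)" using wb by simp
next
  assume H: "wb \<in> carrier_vec ((nu + ny) * T) \<and>
     y_part nu ny T wb = sys_output A B C D nu ny T x0 (u_part nu T wb)"
  let ?u = "u_part nu T wb"
  let ?x = "state_traj A B nu x0 ?u"
  have "\<forall>t < T. ?x (Suc t) = A t *\<^sub>v ?x t + B t *\<^sub>v blk nu ?u t \<and>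
                 blk ny (y_part nu ny T wb) t = C t *\<^sub>v ?x t + D t *\<^sub>v blk nu ?u t"
  proof (intro allI impI conjI)
    fix t assume t: "t < T"
    show "blk ny (y_part nu ny T wb) t = C t *\<^sub>v ?x t + D t *\<^sub>v blk nu ?u t"
    proof -
      have Dt: "D t \<in> carrier_mat ny nu" using dimD t by simp
      have cv: "C t *\<^sub>v ?x t + D t *\<^sub>v blk nu ?u t \<in> carrier_vec ny"
        using Dt unfolding carrier_vec_def by simp
      show ?thesis
        unfolding H[THEN conjunct2] sys_output_def
        using blk_supervec[of t T "\<lambda>t. C t *\<^sub>v ?x t + D t *\<^sub>v blk nu ?u t" ny, OF t cv] by simp
    qed
  qed simp
  then have "\<exists>x. x 0 = x0 \<and> (\<forall>t < T. x (Suc t) = A t *\<^sub>v x t + B t *\<^sub>v blk nu ?u t \<and>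
                 blk ny (y_part nu ny T wb) t = C t *\<^sub>v x t + D t *\<^sub>v blk nu ?u t)"
    by (intro exI[of _ ?x]) simp
  then show "wb \<in> behavior A B C D nu ny T x0"
    unfolding behavior_def using H by blast
qed

lemma mv_index:
  assumes "A \<in> carrier_mat r c" "g \<in> carrier_vec c" "i < r"
  shows "(A *\<^sub>v g) $ i = (\<Sum>j\<in>{0..<c}. A $$ (i,j) * g $ j)"
  using assms by (simp add: mult_mat_vec_def scalar_prod_def)

lemma affine_comb:
  assumes "a \<in> carrier_vec n" "b \<in> carrier_vec n" "M \<in> carrier_mat m n" "F \<in> carrier_vec m"
  shows "c \<cdot>\<^sub>v (M *\<^sub>v a + F) + (1 - c) \<cdot>\<^sub>v (M *\<^sub>v b + F) = M *\<^sub>v (c \<cdot>\<^sub>v a + (1 - c) \<cdot>\<^sub>v b) + (F :: real vec)"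
proof -
  have "M *\<^sub>v (c \<cdot>\<^sub>v a + (1 - c) \<cdot>\<^sub>v b) = c \<cdot>\<^sub>v (M *\<^sub>v a) + (1 - c) \<cdot>\<^sub>v (M *\<^sub>v b)"
    using assms by (simp add: mult_add_distrib_mat_vec mult_mat_vec)
  then show ?thesis using assms by (intro eq_vecI) (auto simp: algebra_simps)
qed

lemma u_part_append: "a \<in> carrier_vec (nu * T) \<Longrightarrow> b \<in> carrier_vec (ny * T) \<Longrightarrow> u_part nu T (a @\<^sub>v b) = a"
  by (intro eq_vecI) (auto simp: u_part_def)

lemma y_part_append: "a \<in> carrier_vec (nu * T) \<Longrightarrow> b \<in> carrier_vec (ny * T) \<Longrightarrow> y_part nu ny T (a @\<^sub>v b) = b"
  by (intro eq_vecI) (auto simp: y_part_def)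

lemma split_parts: "wb \<in> carrier_vec ((nu + ny) * T) \<Longrightarrow> wb = u_part nu T wb @\<^sub>v y_part nu ny T wb"
  by (intro eq_vecI) (auto simp: u_part_def y_part_def algebra_simps)

theorem lemma1:
  fixes A B C D :: "nat \<Rightarrow> real mat" and nx nu ny T :: nat and x0 :: "real vec"
    and us :: "nat \<Rightarrow> real vec"
  assumes T: "T \<ge> 1"
    and dimA: "\<forall>t<T. A t \<in> carrier_mat nx nx"
    and dimB: "\<forall>t<T. B t \<in> carrier_mat nx nu"
    and dimC: "\<forall>t<T. C t \<in> carrier_mat ny nx"
    and dimD: "\<forall>t<T. D t \<in> carrier_mat ny nu"
    and x0: "x0 \<in> carrier_vec nx"
  shows "affine_vec (behavior A B C D nu ny T x0) \<and>
    ((\<forall>k\<le>nu * T. us k \<in> carrier_vec (nu * T))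
     \<and> us 0 = 0\<^sub>v (nu * T)
     \<and> vec_space.rank (nu * T) (mat_of_cols (nu * T) (map us [1..<nu * T + 1])) = nu * T
     \<longrightarrow>
     (let w = (\<lambda>k. us k @\<^sub>v sys_output A B C D nu ny T x0 (us k));
          W = mat_of_cols ((nu + ny) * T) (map (\<lambda>k. w k - w 0) [1..<nu * T + 1])
      in \<forall>wb \<in> carrier_vec ((nu + ny) * T).
           wb \<in> behavior A B C D nu ny T x0 \<longleftrightarrow>
           (\<exists>g \<in> carrier_vec (nu * T). wb = W *\<^sub>v g + w 0)))"
proof -
  let ?n = "nu * T" and ?m = "ny * T"
  let ?M = "Mbig A B C D nx nu ny T" and ?F = "F0 A C x0 ny T"
  have M: "?M \<in> carrier_mat ?m ?n" by (simp add: Mbig_def)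
  have F: "?F \<in> carrier_vec ?m" by (simp add: F0_def supervec_def)
  have out: "\<And>u. u \<in> carrier_vec ?n \<Longrightarrow> sys_output A B C D nu ny T x0 u = ?M *\<^sub>v u + ?F"
    by (rule out_affine[OF dimA dimB dimC dimD x0])
  have beh: "\<And>wb. wb \<in> behavior A B C D nu ny T x0 \<longleftrightarrow> wb \<in> carrier_vec ((nu + ny) * T) \<and>
     y_part nu ny T wb = ?M *\<^sub>v u_part nu T wb + ?F"
    using behavior_iff[OF dimD] out by (auto simp: u_part_def)
  have part1: "affine_vec (behavior A B C D nu ny T x0)"
    unfolding affine_vec_def
  proof (intro ballI allI)
    fix x y and c :: real
    assume x: "x \<in> behavior A B C D nu ny T x0" and y: "y \<in> behavior A B C D nu ny T x0"
    let ?z = "c \<cdot>\<^sub>v x + (1 - c) \<cdot>\<^sub>v y"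
    have xc: "x \<in> carrier_vec ((nu + ny) * T)" and xe: "y_part nu ny T x = ?M *\<^sub>v u_part nu T x + ?F"
      using x beh by auto
    have yc: "y \<in> carrier_vec ((nu + ny) * T)" and ye: "y_part nu ny T y = ?M *\<^sub>v u_part nu T y + ?F"
      using y beh by auto
    have zc: "?z \<in> carrier_vec ((nu + ny) * T)" using xc yc by simp
    have uz: "u_part nu T ?z = c \<cdot>\<^sub>v u_part nu T x + (1 - c) \<cdot>\<^sub>v u_part nu T y"
      using xc yc by (intro eq_vecI) (auto simp: u_part_def algebra_simps)
    have yz: "y_part nu ny T ?z = c \<cdot>\<^sub>v y_part nu ny T x + (1 - c) \<cdot>\<^sub>v y_part nu ny T y"
      using xc yc by (intro eq_vecI) (auto simp: y_part_def algebra_simps)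
    have "y_part nu ny T ?z = ?M *\<^sub>v u_part nu T ?z + ?F"
      unfolding yz xe ye uz
      by (rule affine_comb[OF _ _ M F]) (auto simp: u_part_def)
    then show "?z \<in> behavior A B C D nu ny T x0" using beh zc by blast
  qed
  show ?thesis
  proof (intro conjI part1 impI)
    assume H: "(\<forall>k\<le>nu * T. us k \<in> carrier_vec (nu * T))
     \<and> us 0 = 0\<^sub>v (nu * T)
     \<and> vec_space.rank (nu * T) (mat_of_cols (nu * T) (map us [1..<nu * T + 1])) = nu * T"
    have usc: "\<And>k. k \<le> ?n \<Longrightarrow> us k \<in> carrier_vec ?n" using H by auto
    define w where "w k = us k @\<^sub>v sys_output A B C D nu ny T x0 (us k)" for k
    define W where "W = mat_of_cols ((nu + ny) * T) (map (\<lambda>k. w k - w 0) [1..<nu * T + 1])"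
    define U where "U = mat_of_cols ?n (map us [1..<?n + 1])"
    have U: "U \<in> carrier_mat ?n ?n"
      unfolding U_def using mat_of_cols_carrier(1)[of ?n "map us [1..<?n+1]"] by (simp del: upt_Suc)
    have W: "W \<in> carrier_mat ((nu + ny) * T) ?n"
      unfolding W_def using mat_of_cols_carrier(1)[of "(nu + ny) * T" "map (\<lambda>k. w k - w 0) [1..<?n+1]"] by (simp del: upt_Suc)
    have wk: "\<And>k. k \<le> ?n \<Longrightarrow> w k = us k @\<^sub>v (?M *\<^sub>v us k + ?F)"
      using usc out by (simp add: w_def)
    have w0: "w 0 = 0\<^sub>v ?n @\<^sub>v ?F"
    proof -
      have "?M *\<^sub>v 0\<^sub>v ?n + ?F = ?F" using M F by (intro eq_vecI) auto
      then show ?thesis using wk[of 0] H by simp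
    qed
    have Wij: "\<And>i j. i < (nu + ny) * T \<Longrightarrow> j < ?n \<Longrightarrow> W $$ (i,j) = (w (Suc j) - w 0) $ i"
      by (simp add: W_def mat_of_cols_index nth_upt del: upt_Suc)
    have Uij: "\<And>i j. i < ?n \<Longrightarrow> j < ?n \<Longrightarrow> U $$ (i,j) = us (Suc j) $ i"
      by (simp add: U_def mat_of_cols_index nth_upt del: upt_Suc)
    have colU: "\<And>j. j < ?n \<Longrightarrow> col U j = us (Suc j)"
      using usc by (simp add: U_def nth_upt del: upt_Suc)
    have MUij: "\<And>i j. i < ?m \<Longrightarrow> j < ?n \<Longrightarrow> (?M * U) $$ (i,j) = (?M *\<^sub>v us (Suc j)) $ i"
      using M U colU by simp
    have K: "\<And>g. g \<in> carrier_vec ?n \<Longrightarrow> W *\<^sub>v g + w 0 = (U *\<^sub>v g) @\<^sub>v (?M *\<^sub>v (U *\<^sub>v g) + ?F)"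
    proof -
      fix g :: "real vec" assume g: "g \<in> carrier_vec ?n"
      show "W *\<^sub>v g + w 0 = (U *\<^sub>v g) @\<^sub>v (?M *\<^sub>v (U *\<^sub>v g) + ?F)"
      proof (rule eq_vecI)
        fix i assume "i < dim_vec ((U *\<^sub>v g) @\<^sub>v (?M *\<^sub>v (U *\<^sub>v g) + ?F))"
        hence i: "i < ?n + ?m" using U M F by simp
        hence i2: "i < (nu + ny) * T" by (simp add: algebra_simps)
        have L: "(W *\<^sub>v g + w 0) $ i = (\<Sum>j\<in>{0..<?n}. (w (Suc j) - w 0) $ i * g $ j) + w 0 $ i"
        proof -
          have dw0: "dim_vec (w 0) = (nu + ny) * T" using w0 F by (simp add: algebra_simps)
          have "(W *\<^sub>v g + w 0) $ i = (W *\<^sub>v g) $ i + w 0 $ i" using dw0 i2 by simp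
          also have "(W *\<^sub>v g) $ i = (\<Sum>j\<in>{0..<?n}. W $$ (i,j) * g $ j)" by (rule mv_index[OF W g i2])
          also have "\<dots> = (\<Sum>j\<in>{0..<?n}. (w (Suc j) - w 0) $ i * g $ j)"
            using Wij i2 by (intro sum.cong) auto
          finally show ?thesis .
        qed
        show "(W *\<^sub>v g + w 0) $ i = ((U *\<^sub>v g) @\<^sub>v (?M *\<^sub>v (U *\<^sub>v g) + ?F)) $ i"
        proof (cases "i < ?n")
          case True
          have "(\<Sum>j\<in>{0..<?n}. (w (Suc j) - w 0) $ i * g $ j) = (\<Sum>j\<in>{0..<?n}. U $$ (i,j) * g $ j)"
          proof (rule sum.cong)
            fix j assume "j \<in> {0..<?n}"
            hence j: "j < ?n" by simp
            have "Suc j \<le> ?n" using j by simp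
            then show "(w (Suc j) - w 0) $ i * g $ j = U $$ (i,j) * g $ j"
              using True j usc[of "Suc j"] M F w0 wk[of "Suc j"] Uij by simp
          qed simp
          then show ?thesis using L True U g w0 F by (simp add: mv_index[OF U g True])
        next
          case False
          define i' where "i' = i - ?n"
          have i': "i' < ?m" using i False by (simp add: i'_def)
          have "(\<Sum>j\<in>{0..<?n}. (w (Suc j) - w 0) $ i * g $ j) = (\<Sum>j\<in>{0..<?n}. (?M * U) $$ (i',j) * g $ j)"
          proof (rule sum.cong)
            fix j assume "j \<in> {0..<?n}"
            hence j: "j < ?n" by simp
            have "Suc j \<le> ?n" using j by simp
            then show "(w (Suc j) - w 0) $ i * g $ j = (?M * U) $$ (i',j) * g $ j"
              using False i i' j usc[of "Suc j"] M F w0 wk[of "Suc j"] MUij by (simp add: i'_def)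
          qed simp
          also have "\<dots> = ((?M * U) *\<^sub>v g) $ i'"
            by (rule mv_index[symmetric, OF mult_carrier_mat[OF M U] g i'])
          also have "\<dots> = (?M *\<^sub>v (U *\<^sub>v g)) $ i'"
            using M U g by (simp add: assoc_mult_mat_vec)
          finally show ?thesis using L False U M g w0 F i' by (simp add: i'_def)
        qed
      qed (use U M F W g w0 in \<open>auto simp: algebra_simps\<close>)
    qed
    have surj: "\<And>u. u \<in> carrier_vec ?n \<Longrightarrow> \<exists>g \<in> carrier_vec ?n. U *\<^sub>v g = u"
    proof -
      fix u :: "real vec" assume u: "u \<in> carrier_vec ?n"
      have "det U \<noteq> 0" using vec_space.det_rank_iff[OF U] H by (simp add: U_def del: upt_Suc)
      from det_non_zero_imp_unit[OF U this, of undefined]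
      obtain V where V: "V \<in> carrier_mat ?n ?n" and UV: "U * V = 1\<^sub>m ?n"
        unfolding Units_def ring_mat_def by auto
      have "U *\<^sub>v (V *\<^sub>v u) = u" using U V u UV by (simp flip: assoc_mult_mat_vec)
      then show "\<exists>g \<in> carrier_vec ?n. U *\<^sub>v g = u" using V u by (intro bexI[of _ "V *\<^sub>v u"]) auto
    qed
    have main: "\<forall>wb\<in>carrier_vec ((nu + ny) * T).
           wb \<in> behavior A B C D nu ny T x0 \<longleftrightarrow> (\<exists>g \<in> carrier_vec ?n. wb = W *\<^sub>v g + w 0)"
    proof (intro ballI iffI)
      fix wb assume wb: "wb \<in> carrier_vec ((nu + ny) * T)" and "wb \<in> behavior A B C D nu ny T x0"
      then have ye: "y_part nu ny T wb = ?M *\<^sub>v u_part nu T wb + ?F" using beh by blast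
      have uc: "u_part nu T wb \<in> carrier_vec ?n" by (simp add: u_part_def)
      obtain g where g: "g \<in> carrier_vec ?n" and Ug: "U *\<^sub>v g = u_part nu T wb" using surj[OF uc] by blast
      have "W *\<^sub>v g + w 0 = u_part nu T wb @\<^sub>v y_part nu ny T wb" using K[OF g] Ug ye by simp
      also have "\<dots> = wb" using split_parts[OF wb] by simp
      finally show "\<exists>g \<in> carrier_vec ?n. wb = W *\<^sub>v g + w 0" using g by metis
    next
      fix wb assume wb: "wb \<in> carrier_vec ((nu + ny) * T)" and "\<exists>g \<in> carrier_vec ?n. wb = W *\<^sub>v g + w 0"
      then obtain g where g: "g \<in> carrier_vec ?n" and wbg: "wb = W *\<^sub>v g + w 0" by blast
      have e: "wb = (U *\<^sub>v g) @\<^sub>v (?M *\<^sub>v (U *\<^sub>v g) + ?F)" using K[OF g] wbg by simp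
      have c1: "U *\<^sub>v g \<in> carrier_vec ?n" using U g by simp
      have c2: "?M *\<^sub>v (U *\<^sub>v g) + ?F \<in> carrier_vec ?m" by (rule add_carrier_vec[OF mult_mat_vec_carrier[OF M mult_mat_vec_carrier[OF U g]] F])
      show "wb \<in> behavior A B C D nu ny T x0"
        using beh wb e u_part_append[OF c1 c2] y_part_append[OF c1 c2] by metis
    qed
    show "let w = (\<lambda>k. us k @\<^sub>v sys_output A B C D nu ny T x0 (us k));
          W = mat_of_cols ((nu + ny) * T) (map (\<lambda>k. w k - w 0) [1..<nu * T + 1])
      in \<forall>wb \<in> carrier_vec ((nu + ny) * T).
           wb \<in> behavior A B C D nu ny T x0 \<longleftrightarrow>
           (\<exists>g \<in> carrier_vec (nu * T). wb = W *\<^sub>v g + w 0)"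
      using main unfolding Let_def W_def w_def by simp
  qed
qed

end
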